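(* Let $G$ be a persistent graph with vertex order $<$, let $k\ge 4$, and let $p_1,\dots,p_k\in V(G)$ form an induced cycle in this order (edges $\{p_i,p_{i+1}\}$ for $1\le i<k$ and $\{p_k,p_1\}$). If $p_2$ is the leftmost of $p_1,\dots,p_k$, then each of $p_4,\dots,p_k$ lies to the left of both $p_1$ and $p_3$.
   Context: A persistent graph is a graph $G$ together with a linear order $v_1<v_2<\dots<v_n$ on $V(G)$ such that (1) $\{v_i,v_{i+1}\}\in E(G)$ for all $i$; (2) X-property: for all $p<q<r<s$, if $\{p,r\}\in E(G)$ and $\{q,s\}\in E(G)$ then $\{p,s\}\in E(G)$; (3) bar-property: if $\{p,q\}\in E(G)$ and $p,q$ are not consecutive in the order, then there is a vertex $r$ with $p<r<q$ adjacent to both $p$ and $q$. "Left of" refers to the order $<$. *)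

theory Defs
  imports Main
begin

text \<open>Simple graph on a finite vertex set V of a linearly ordered type; the vertex
order is the type's order restricted to V. Edges: symmetric irreflexive relation E.\<close>

definition consec :: "'a::linorder set \<Rightarrow> 'a \<Rightarrow> 'a \<Rightarrow> bool" where
  "consec V p q \<longleftrightarrow> p \<in> V \<and> q \<in> V \<and> p < q \<and> \<not> (\<exists>r\<in>V. p < r \<and> r < q)"

definition simple_graph :: "'a set \<Rightarrow> ('a \<Rightarrow> 'a \<Rightarrow> bool) \<Rightarrow> bool" where
  "simple_graph V E \<longleftrightarrow> finite V \<and> (\<forall>x y. E x y \<longrightarrow> x \<in> V \<and> y \<in> V)
     \<and> (\<forall>x y. E x y \<longrightarrow> E y x) \<and> (\<forall>x. \<not> E x x)"

definition persistent_graph :: "'a::linorder set \<Rightarrow> ('a \<Rightarrow> 'a \<Rightarrow> bool) \<Rightarrow> bool" where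
  "persistent_graph V E \<longleftrightarrow> simple_graph V E
     \<and> (\<forall>p q. consec V p q \<longrightarrow> E p q)
     \<and> (\<forall>p\<in>V. \<forall>q\<in>V. \<forall>r\<in>V. \<forall>s\<in>V. p < q \<and> q < r \<and> r < s \<and> E p r \<and> E q s \<longrightarrow> E p s)
     \<and> (\<forall>p q. E p q \<and> p < q \<and> \<not> consec V p q \<longrightarrow> (\<exists>r\<in>V. p < r \<and> r < q \<and> E p r \<and> E r q))"

definition induced_cycle :: "'a set \<Rightarrow> ('a \<Rightarrow> 'a \<Rightarrow> bool) \<Rightarrow> nat \<Rightarrow> (nat \<Rightarrow> 'a) \<Rightarrow> bool" where
  "induced_cycle V E k p \<longleftrightarrow> (\<forall>i\<in>{1..k}. p i \<in> V) \<and> inj_on p {1..k}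
     \<and> (\<forall>i\<in>{1..k}. \<forall>j\<in>{1..k}. E (p i) (p j) \<longleftrightarrow>
           (j = i + 1 \<or> i = j + 1 \<or> (i = 1 \<and> j = k) \<or> (i = k \<and> j = 1)))"

end

theory Submission
  imports Defs
begin

lemma chain_side:
  fixes f :: "nat \<Rightarrow> 'a::linorder"
  assumes "\<forall>j. a \<le> j \<and> j < c \<longrightarrow> (f j < v \<longleftrightarrow> f (Suc j) < v)"
  shows "a \<le> i \<Longrightarrow> i \<le> c \<Longrightarrow> (f i < v \<longleftrightarrow> f a < v)"
proof (induction i)
  case 0
  then show ?case by simp
next
  case (Suc i)
  show ?case
  proof (cases "a = Suc i")
    case True then show ?thesis by simp
  next
    case False
    then have "a \<le> i" "i < c" using Suc.prems by auto
    then show ?thesis using Suc.IH assms by auto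
  qed
qed

lemma core:
  fixes V :: "'a::linorder set"
  assumes X: "\<forall>p\<in>V. \<forall>q\<in>V. \<forall>r\<in>V. \<forall>s\<in>V. p < q \<and> q < r \<and> r < s \<and> E p r \<and> E q s \<longrightarrow> E p s"
    and bar: "\<forall>p q. E p q \<and> p < q \<and> \<not> consec V p q \<longrightarrow> (\<exists>r\<in>V. p < r \<and> r < q \<and> E p r \<and> E r q)"
    and EV: "\<forall>x y. E x y \<longrightarrow> x \<in> V \<and> y \<in> V" and fin: "finite V"
    and aV: "a \<in> V" and mV: "m \<in> V" and MV: "M \<in> V"
    and am: "a < m" and mM: "m < M" and Eam: "E a m" and EaM: "E a M" and nEmM: "\<not> E m M"
    and wV: "w \<in> V" and zV: "z \<in> V" and Emw: "E m w" and EzM: "E z M" and mz: "m < z"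
    and nEaw: "\<not> E a w"
    and H: "\<forall>b\<in>V. E a b \<and> m < b \<and> b < M \<and> w < b \<longrightarrow> z < b"
  shows False
proof -
  define S where "S = {v\<in>V. m < v \<and> E a v}"
  have finS: "finite S" using fin unfolding S_def by auto
  have MS: "M \<in> S" using MV mM EaM unfolding S_def by auto
  define b where "b = Min S"
  have bS: "b \<in> S" unfolding b_def using finS MS Min_in by blast
  have bmin: "\<And>v. v \<in> S \<Longrightarrow> b \<le> v" unfolding b_def using finS by auto
  have bM: "b \<le> M" using bmin MS by auto
  have bV: "b \<in> V" and mb: "m < b" and Eab: "E a b" using bS unfolding S_def by auto
  have wb: "w < b"
  proof (rule ccontr)
    assume "\<not> w < b"
    then have "b < w \<or> b = w" by auto
    then show False
    proof
      assume "b < w"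
      then have "E a w" using X aV mV bV wV am mb Eab Emw by blast
      then show False using nEaw by simp
    next
      assume "b = w" then show False using Eab nEaw by simp
    qed
  qed
  have nEmb: "\<not> E m b"
  proof
    assume Emb: "E m b"
    show False
    proof (cases "b = M")
      case True then show ?thesis using Emb nEmM by simp
    next
      case False
      then have "b < M" using bM by simp
      then have "z < b" using H bV Eab mb wb by blast
      then have "E m M" using X mV zV bV MV mz \<open>b < M\<close> Emb EzM by blast
      then show False using nEmM by simp
    qed
  qed
  define C where "C = {v\<in>V. a \<le> v \<and> v < m \<and> E v b}"
  have finC: "finite C" using fin unfolding C_def by auto
  have aC: "a \<in> C" using aV am Eab unfolding C_def by auto
  define c where "c = Max C"
  have cC: "c \<in> C" unfolding c_def using finC aC Max_in by blast
  have cmax: "\<And>v. v \<in> C \<Longrightarrow> v \<le> c" unfolding c_def using finC by auto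
  have cV: "c \<in> V" and ac: "a \<le> c" and cm: "c < m" and Ecb: "E c b" using cC unfolding C_def by auto
  have ncons: "\<not> consec V c b" using mV cm mb unfolding consec_def by auto
  have cb: "c < b" using cm mb by simp
  obtain c' where c'V: "c' \<in> V" and cc': "c < c'" and c'b: "c' < b" and Ecc': "E c c'" and Ec'b: "E c' b"
    using bar Ecb cb ncons by blast
  consider "c' = m" | "m < c'" | "c' < m" by fastforce
  then show False
  proof cases
    case 1 then show ?thesis using Ec'b nEmb by simp
  next
    case 2
    have "E a c'"
    proof (cases "c = a")
      case True then show ?thesis using Ecc' by simp
    next
      case False
      then have "a < c" using ac by simp
      then show ?thesis using X aV cV mV c'V cm 2 Eam Ecc' by blast
    qed
    then have "c' \<in> S" using c'V 2 unfolding S_def by auto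
    then show ?thesis using bmin c'b by fastforce
  next
    case 3
    then have "c' \<in> C" using c'V ac cc' Ec'b unfolding C_def by auto
    then show ?thesis using cmax cc' by fastforce
  qed
qed

theorem lemma3:
  fixes V :: "'a::linorder set" and E :: "'a \<Rightarrow> 'a \<Rightarrow> bool"
    and k :: nat and p :: "nat \<Rightarrow> 'a"
  assumes "persistent_graph V E"
    and "k \<ge> 4"
    and "induced_cycle V E k p"
    and "\<forall>i\<in>{1..k}. p 2 \<le> p i"
  shows "\<forall>i\<in>{4..k}. p i < p 1 \<and> p i < p 3"
proof -
  have fin: "finite V" and EV: "\<forall>x y. E x y \<longrightarrow> x \<in> V \<and> y \<in> V"
    and sym: "\<forall>x y. E x y \<longrightarrow> E y x"
    and X: "\<forall>p\<in>V. \<forall>q\<in>V. \<forall>r\<in>V. \<forall>s\<in>V. p < q \<and> q < r \<and> r < s \<and> E p r \<and> E q s \<longrightarrow> E p s"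
    and bar: "\<forall>p q. E p q \<and> p < q \<and> \<not> consec V p q \<longrightarrow> (\<exists>r\<in>V. p < r \<and> r < q \<and> E p r \<and> E r q)"
    using assms(1) unfolding persistent_graph_def simple_graph_def by blast+
  have pV: "\<And>i. i \<in> {1..k} \<Longrightarrow> p i \<in> V" and inj: "inj_on p {1..k}"
    and Eiff: "\<And>i j. i \<in> {1..k} \<Longrightarrow> j \<in> {1..k} \<Longrightarrow> E (p i) (p j) \<longleftrightarrow>
           (j = i + 1 \<or> i = j + 1 \<or> (i = 1 \<and> j = k) \<or> (i = k \<and> j = 1))"
    using assms(3) unfolding induced_cycle_def by blast+
  have k4: "k \<ge> 4" by fact
  have neq: "\<And>i j. i \<in> {1..k} \<Longrightarrow> j \<in> {1..k} \<Longrightarrow> i \<noteq> j \<Longrightarrow> p i \<noteq> p j"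
    using inj unfolding inj_on_def by blast
  have lt2: "\<And>i. i \<in> {1..k} \<Longrightarrow> i \<noteq> 2 \<Longrightarrow> p 2 < p i"
  proof -
    fix i assume "i \<in> {1..k}" "i \<noteq> 2"
    then have "p 2 \<le> p i" "p 2 \<noteq> p i" using assms(4) neq[of 2 i] k4 by auto
    then show "p 2 < p i" by simp
  qed
  have E21: "E (p 2) (p 1)" using Eiff[of 2 1] k4 by auto
  have E23: "E (p 2) (p 3)" using Eiff[of 2 3] k4 by auto
  have nE13: "\<not> E (p 1) (p 3)" using Eiff[of 1 3] k4 by auto
  have nE2i: "\<And>i. i \<in> {4..k} \<Longrightarrow> \<not> E (p 2) (p i)" using Eiff k4 by auto
  have Eint: "\<And>j. 4 \<le> j \<Longrightarrow> j < k \<Longrightarrow> E (p j) (p (Suc j))" using Eiff by auto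
  have E34: "E (p 3) (p 4)" using Eiff[of 3 4] k4 by auto
  have Ek1: "E (p k) (p 1)" using Eiff[of k 1] k4 by auto
  have intV: "\<And>i. i \<in> {4..k} \<Longrightarrow> p i \<in> V" using pV by auto
  have int2: "\<And>i. i \<in> {4..k} \<Longrightarrow> p 2 < p i" using lt2 by auto
  have p2V: "p 2 \<in> V" using pV k4 by auto
  have side: "\<And>v i. v \<in> V \<Longrightarrow> E (p 2) v \<Longrightarrow> p 2 < v \<Longrightarrow> i \<in> {4..k} \<Longrightarrow> (p i < v \<longleftrightarrow> p 4 < v)"
  proof -
    fix v i assume vV: "v \<in> V" and E2v: "E (p 2) v" and p2v: "p 2 < v" and i: "i \<in> {4..k}"
    have step: "\<forall>j. 4 \<le> j \<and> j < k \<longrightarrow> (p j < v \<longleftrightarrow> p (Suc j) < v)"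
    proof (intro allI impI)
      fix j assume j: "4 \<le> j \<and> j < k"
      have jI: "j \<in> {4..k}" and sjI: "Suc j \<in> {4..k}" using j by auto
      have ne1: "p j \<noteq> v" using E2v nE2i[OF jI] by auto
      have ne2: "p (Suc j) \<noteq> v" using E2v nE2i[OF sjI] by auto
      have Ej: "E (p j) (p (Suc j))" using Eint j by auto
      have c1: "\<not> (p j < v \<and> v < p (Suc j))"
      proof
        assume h: "p j < v \<and> v < p (Suc j)"
        then have "E (p 2) (p (Suc j))" using X p2V intV[OF jI] vV intV[OF sjI] int2[OF jI] E2v Ej by blast
        then show False using nE2i[OF sjI] by simp
      qed
      have c2: "\<not> (p (Suc j) < v \<and> v < p j)"
      proof
        assume h: "p (Suc j) < v \<and> v < p j"
        have Ej': "E (p (Suc j)) (p j)" using sym Ej by blast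
        then have "E (p 2) (p j)" using X p2V intV[OF jI] vV intV[OF sjI] int2[OF sjI] E2v h by blast
        then show False using nE2i[OF jI] by simp
      qed
      show "p j < v \<longleftrightarrow> p (Suc j) < v" using ne1 ne2 c1 c2 by auto
    qed
    show "p i < v \<longleftrightarrow> p 4 < v" using chain_side[OF step, of i] i by auto
  qed
  show ?thesis
  proof (rule ccontr)
    assume "\<not> ?thesis"
    then obtain i0 where i0: "i0 \<in> {4..k}" and ni0: "\<not> (p i0 < p 1 \<and> p i0 < p 3)" by blast
    have p1V: "p 1 \<in> V" and p3V: "p 3 \<in> V" using pV k4 by auto
    have n13: "p 1 \<noteq> p 3" using neq[of 1 3] k4 by auto
    have d1: "\<And>i. i \<in> {4..k} \<Longrightarrow> p i \<noteq> p 1" using neq by fastforce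
    have d3: "\<And>i. i \<in> {4..k} \<Longrightarrow> p i \<noteq> p 3" using neq by fastforce
    have k4I: "4 \<in> {4..k}" and kI: "k \<in> {4..k}" using k4 by auto
    have p21: "p 2 < p 1" and p23: "p 2 < p 3" using lt2 k4 by auto
    show False
    proof (cases "p 1 < p 3")
      case True
      have "p 1 < p i0" using ni0 True d1[OF i0] by auto
      then have gt: "\<And>i. i \<in> {4..k} \<Longrightarrow> p 1 < p i"
        using side[OF p1V E21 p21] i0 d1 by (meson not_less_iff_gr_or_eq)
      show False
      proof (rule core[OF X bar EV fin p2V p1V p3V p21 True E21 E23 nE13 intV[OF kI] intV[OF k4I]])
        show "E (p 1) (p k)" using sym Ek1 by blast
        show "E (p 4) (p 3)" using sym E34 by blast
        show "p 1 < p 4" using gt k4I by blast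
        show "\<not> E (p 2) (p k)" using nE2i kI by blast
        show "\<forall>b\<in>V. E (p 2) b \<and> p 1 < b \<and> b < p 3 \<and> p k < b \<longrightarrow> p 4 < b"
          using side kI p21 by (meson order.strict_trans)
      qed
    next
      case False
      then have F: "p 3 < p 1" using n13 by auto
      have "p 3 < p i0" using ni0 F d3[OF i0] by auto
      then have gt: "\<And>i. i \<in> {4..k} \<Longrightarrow> p 3 < p i"
        using side[OF p3V E23 p23] i0 d3 by (meson not_less_iff_gr_or_eq)
      have nE31: "\<not> E (p 3) (p 1)" using sym nE13 by blast
      show False
      proof (rule core[OF X bar EV fin p2V p3V p1V p23 F E23 E21 nE31 intV[OF k4I] intV[OF kI] E34 Ek1])
        show "p 3 < p k" using gt kI by blast
        show "\<not> E (p 2) (p 4)" using nE2i k4I by blast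
        show "\<forall>b\<in>V. E (p 2) b \<and> p 3 < b \<and> b < p 1 \<and> p 4 < b \<longrightarrow> p k < b"
          using side kI p23 by (meson order.strict_trans)
      qed
    qed
  qed
qed

end
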